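(* Let $\mathsf V$ be a quantale in which $k=\top$ is the top element and for which there is a sequence $(u_n)_{n\in\mathbb N}$ with $\bigvee_n u_n=k$, $u_n\ll k$ and $u_n\le u_{n+1}$ for all $n$. (1) If $X=(X,a)$ is a symmetric $\mathsf V$-category and $\varphi:E\rightharpoonup X$, $\psi:X\rightharpoonup E$ are modules with $\varphi\dashv\psi$, then $\varphi(x)=\psi(x)$ for all $x\in X$. (2) If $M$ is a sub-$\mathsf V$-category of a $\mathsf V$-category $Y=(Y,b)$ and $M$ is symmetric, then $\overline M$ (with the restricted structure) is symmetric. (3) In particular, for a symmetric $\mathsf V$-category $X$, its Cauchy completion $\widetilde X$ is symmetric.
   Context: A quantale $(\mathsf V,\otimes,k)$ is a complete anti-symmetric lattice with an associative, commutative operation $\otimes$ with neutral element $k$ distributing over arbitrary suprema; $\hom(u,-)$ is the right adjoint of $u\otimes-$. $u\ll x$ means: for every $S\subseteq\mathsf V$ with $x\le\bigvee S$ there is $s\in S$ with $u\le s$. A $\mathsf V$-category $(X,a)$ is a set with $a:X\times X\to\mathsf V$ such that $k\le a(x,x)$ and $a(x,y)\otimes a(y,z)\le a(x,z)$; it is symmetric if $a(x,y)=a(y,x)$ for all $x,y$; a sub-$\mathsf V$-category carries the restricted structure. $E=(\{\star\},k)$; modules $\varphi:E\rightharpoonup X$ and $\psi:X\rightharpoonup E$ are maps $X\to\mathsf V$ with $\varphi(x)\otimes a(x,y)\le\varphi(y)$ and $a(x,y)\otimes\psi(y)\le\psi(x)$; $\varphi\dashv\psi$ means $k\le\bigvee_x\varphi(x)\otimes\psi(x)$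 and $\psi(x)\otimes\varphi(y)\le a(x,y)$ for all $x,y$. For $M\subseteq Y$, $\overline M=\{y\in Y\mid k\le\bigvee_{z\in M}b(y,z)\otimes b(z,y)\}$. The Cauchy completion $\widetilde X$ is the set of right adjoint modules $\psi:X\rightharpoonup E$ with structure $[\psi,\psi']=\bigwedge_{x}\hom(\psi(x),\psi'(x))$. *)

theory Defs
  imports Main
begin

definition quantale :: "('v::complete_lattice \<Rightarrow> 'v \<Rightarrow> 'v) \<Rightarrow> 'v \<Rightarrow> bool" where
  "quantale tensor k \<longleftrightarrow>
     (\<forall>u v w. tensor (tensor u v) w = tensor u (tensor v w)) \<and>
     (\<forall>u v. tensor u v = tensor v u) \<and>
     (\<forall>u. tensor k u = u) \<and>
     (\<forall>u S. tensor u (Sup S) = Sup (tensor u ` S))"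

definition qhom :: "('v::complete_lattice \<Rightarrow> 'v \<Rightarrow> 'v) \<Rightarrow> 'v \<Rightarrow> 'v \<Rightarrow> 'v" where
  "qhom tensor u v = Sup {w. tensor u w \<le> v}"

definition way_below :: "'v::complete_lattice \<Rightarrow> 'v \<Rightarrow> bool" where
  "way_below u x \<longleftrightarrow> (\<forall>S. x \<le> Sup S \<longrightarrow> (\<exists>s\<in>S. u \<le> s))"

definition vcat :: "('v::complete_lattice \<Rightarrow> 'v \<Rightarrow> 'v) \<Rightarrow> 'v \<Rightarrow> 'a set \<Rightarrow> ('a \<Rightarrow> 'a \<Rightarrow> 'v) \<Rightarrow> bool" where
  "vcat tensor k X a \<longleftrightarrow>
     (\<forall>x\<in>X. k \<le> a x x) \<and>
     (\<forall>x\<in>X. \<forall>y\<in>X. \<forall>z\<in>X. tensor (a x y) (a y z) \<le> a x z)"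

definition vsymmetric :: "'a set \<Rightarrow> ('a \<Rightarrow> 'a \<Rightarrow> 'v) \<Rightarrow> bool" where
  "vsymmetric X a \<longleftrightarrow> (\<forall>x\<in>X. \<forall>y\<in>X. a x y = a y x)"

text \<open>Module E -/-> X.\<close>
definition left_module :: "('v::complete_lattice \<Rightarrow> 'v \<Rightarrow> 'v) \<Rightarrow> 'a set \<Rightarrow> ('a \<Rightarrow> 'a \<Rightarrow> 'v) \<Rightarrow> ('a \<Rightarrow> 'v) \<Rightarrow> bool" where
  "left_module tensor X a \<phi> \<longleftrightarrow> (\<forall>x\<in>X. \<forall>y\<in>X. tensor (\<phi> x) (a x y) \<le> \<phi> y)"

text \<open>Module X -/-> E.\<close>
definition right_module :: "('v::complete_lattice \<Rightarrow> 'v \<Rightarrow> 'v) \<Rightarrow> 'a set \<Rightarrow> ('a \<Rightarrow> 'a \<Rightarrow> 'v) \<Rightarrow> ('a \<Rightarrow> 'v) \<Rightarrow> bool" where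
  "right_module tensor X a \<psi> \<longleftrightarrow> (\<forall>x\<in>X. \<forall>y\<in>X. tensor (a x y) (\<psi> y) \<le> \<psi> x)"

definition module_adjoint :: "('v::complete_lattice \<Rightarrow> 'v \<Rightarrow> 'v) \<Rightarrow> 'v \<Rightarrow> 'a set \<Rightarrow> ('a \<Rightarrow> 'a \<Rightarrow> 'v) \<Rightarrow> ('a \<Rightarrow> 'v) \<Rightarrow> ('a \<Rightarrow> 'v) \<Rightarrow> bool" where
  "module_adjoint tensor k X a \<phi> \<psi> \<longleftrightarrow>
     k \<le> (SUP x\<in>X. tensor (\<phi> x) (\<psi> x)) \<and>
     (\<forall>x\<in>X. \<forall>y\<in>X. tensor (\<psi> x) (\<phi> y) \<le> a x y)"

definition vclosure :: "('v::complete_lattice \<Rightarrow> 'v \<Rightarrow> 'v) \<Rightarrow> 'v \<Rightarrow> 'b set \<Rightarrow> ('b \<Rightarrow> 'b \<Rightarrow> 'v) \<Rightarrow> 'b set \<Rightarrow> 'b set" where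
  "vclosure tensor k Y b M = {y\<in>Y. k \<le> (SUP z\<in>M. tensor (b y z) (b z y))}"

text \<open>Cauchy completion: right adjoint modules X -/-> E, represented as maps
  X \<Rightarrow> V (extended by bot outside X).\<close>
definition cauchy :: "('v::complete_lattice \<Rightarrow> 'v \<Rightarrow> 'v) \<Rightarrow> 'v \<Rightarrow> 'a set \<Rightarrow> ('a \<Rightarrow> 'a \<Rightarrow> 'v) \<Rightarrow> ('a \<Rightarrow> 'v) set" where
  "cauchy tensor k X a = {\<psi>. (\<forall>x. x \<notin> X \<longrightarrow> \<psi> x = bot) \<and> right_module tensor X a \<psi> \<and>
      (\<exists>\<phi>. left_module tensor X a \<phi> \<and> module_adjoint tensor k X a \<phi> \<psi>)}"

definition cauchy_struct :: "('v::complete_lattice \<Rightarrow> 'v \<Rightarrow> 'v) \<Rightarrow> 'a set \<Rightarrow> ('a \<Rightarrow> 'v) \<Rightarrow> ('a \<Rightarrow> 'v) \<Rightarrow> 'v" where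
  "cauchy_struct tensor X \<psi> \<psi>' = (INF x\<in>X. qhom tensor (\<psi> x) (\<psi>' x))"

end

theory Submission
  imports Defs
begin

locale iq =
  fixes T :: "'v::complete_lattice \<Rightarrow> 'v \<Rightarrow> 'v" and k :: 'v
  assumes q: "quantale T k" and ktop: "k = top"
begin

lemma assoc: "T (T u v) w = T u (T v w)" using q unfolding quantale_def by blast
lemma commute: "T u v = T v u" using q unfolding quantale_def by blast
lemma left_commute: "T u (T v w) = T v (T u w)" by (metis assoc commute)
lemmas ac = assoc commute left_commute
lemma unitl: "T k u = u" using q unfolding quantale_def by blast
lemma unitr: "T u k = u" using unitl commute by metis
lemma distr: "T u (Sup S) = Sup (T u ` S)" using q unfolding quantale_def by blast
lemma distrl: "T (Sup S) u = Sup ((\<lambda>s. T s u) ` S)"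
  using distr[of u S] commute by (simp add: image_image)

lemma monor: "a \<le> b \<Longrightarrow> T u a \<le> T u b"
proof -
  assume "a \<le> b"
  then have "b = Sup {a, b}" by (simp add: sup.absorb2)
  then have "T u b = Sup {T u a, T u b}" using distr[of u "{a,b}"] by simp
  then show ?thesis by (metis Sup_upper insertI1)
qed

lemma mono2: "a \<le> a' \<Longrightarrow> b \<le> b' \<Longrightarrow> T a b \<le> T a' b'"
  by (metis monor commute order_trans)

lemma le_left: "T u v \<le> u"
  using monor[of v k u] unitr ktop by simp
lemma le_right: "T u v \<le> v" using le_left commute by metis

lemma hom_intro: "T u w \<le> v \<Longrightarrow> w \<le> qhom T u v"
  unfolding qhom_def by (rule Sup_upper) simp
lemma hom_elim: "T u (qhom T u v) \<le> v"
  unfolding qhom_def distr by (auto intro: Sup_least)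

lemma sq_sup:
  assumes "(SUP n. w n) = k" "\<forall>n. w n \<le> w (Suc n)"
  shows "(SUP n. T (w n) (w n)) = k"
proof -
  have mono: "n \<le> m \<Longrightarrow> w n \<le> w m" for n m using assms(2) by (metis lift_Suc_mono_le)
  have "k = T (SUP n. w n) (SUP m. w m)" using assms unitl by simp
  also have "\<dots> = (SUP m. SUP n. T (w n) (w m))"
    unfolding distrl distr by (simp add: image_image)
  also have "\<dots> \<le> (SUP n. T (w n) (w n))"
  proof (intro SUP_least)
    fix n m
    have "T (w n) (w m) \<le> T (w (max n m)) (w (max n m))"
      by (intro mono2 mono) auto
    also have "\<dots> \<le> (SUP n. T (w n) (w n))" by (rule SUP_upper) simp
    finally show "T (w n) (w m) \<le> (SUP n. T (w n) (w n))" .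
  qed
  finally show ?thesis using ktop top.extremum_unique by metis
qed

lemma absorb:
  assumes "(SUP n. v n) = k" "\<And>n. T (v n) c \<le> d"
  shows "c \<le> d"
proof -
  have "c = T (SUP n. v n) c" using assms(1) unitl by simp
  also have "\<dots> = (SUP n. T (v n) c)" unfolding distrl by (simp add: image_image)
  also have "\<dots> \<le> d" using assms(2) by (intro SUP_least)
  finally show ?thesis .
qed

lemma wb: "way_below u k \<Longrightarrow> k \<le> (SUP x\<in>X. f x) \<Longrightarrow> \<exists>x\<in>X. u \<le> f x"
  unfolding way_below_def by (metis imageE)

end


context iq
begin

lemma part1_dir:
  assumes u: "(SUP n. u n) = k" "\<forall>n. way_below (u n) k" "\<forall>n. u n \<le> u (Suc n)"
    and X: "vsymmetric X a" "left_module T X a \<phi>" "right_module T X a \<psi>"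
      "module_adjoint T k X a \<phi> \<psi>" and x: "x \<in> X"
  shows "\<psi> x \<le> \<phi> x \<and> \<phi> x \<le> \<psi> x"
proof -
  have sq: "(SUP n. T (u n) (u n)) = k" using sq_sup u by blast
  have ex: "\<exists>y\<in>X. u n \<le> T (\<phi> y) (\<psi> y)" for n
    using wb[of "u n" _ X] u X(4) unfolding module_adjoint_def by blast
  show ?thesis
  proof
    show "\<psi> x \<le> \<phi> x"
    proof (rule absorb[OF sq])
      fix n
      obtain y where y: "y \<in> X" "u n \<le> T (\<phi> y) (\<psi> y)" using ex by blast
      then have uy: "u n \<le> \<phi> y" using le_left order_trans by blast
      have "T (T (u n) (u n)) (\<psi> x) \<le> T (T (\<phi> y) (\<phi> y)) (\<psi> x)"
        by (intro mono2 uy order_refl)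
      also have "\<dots> = T (\<phi> y) (T (\<psi> x) (\<phi> y))" by (simp add: ac)
      also have "\<dots> \<le> T (\<phi> y) (a x y)"
        using X(4) x y unfolding module_adjoint_def by (intro monor) auto
      also have "\<dots> = T (\<phi> y) (a y x)" using X(1) x y unfolding vsymmetric_def by simp
      also have "\<dots> \<le> \<phi> x" using X(2) x y unfolding left_module_def by auto
      finally show "T (T (u n) (u n)) (\<psi> x) \<le> \<phi> x" .
    qed
    show "\<phi> x \<le> \<psi> x"
    proof (rule absorb[OF sq])
      fix n
      obtain y where y: "y \<in> X" "u n \<le> T (\<phi> y) (\<psi> y)" using ex by blast
      then have uy: "u n \<le> \<psi> y" using le_right order_trans by blast
      have "T (T (u n) (u n)) (\<phi> x) \<le> T (T (\<psi> y) (\<psi> y)) (\<phi> x)"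
        by (intro mono2 uy order_refl)
      also have "\<dots> = T (T (\<psi> y) (\<phi> x)) (\<psi> y)" by (simp add: ac)
      also have "\<dots> \<le> T (a y x) (\<psi> y)"
        using X(4) x y unfolding module_adjoint_def by (intro mono2) auto
      also have "\<dots> = T (a x y) (\<psi> y)" using X(1) x y unfolding vsymmetric_def by simp
      also have "\<dots> \<le> \<psi> x" using X(3) x y unfolding right_module_def by auto
      finally show "T (T (u n) (u n)) (\<phi> x) \<le> \<psi> x" .
    qed
  qed
qed

lemma part2_dir:
  assumes u: "(SUP n. u n) = k" "\<forall>n. way_below (u n) k" "\<forall>n. u n \<le> u (Suc n)"
    and Y: "vcat T k Y b" "M \<subseteq> Y" "vsymmetric M b"
    and y: "y \<in> vclosure T k Y b M" and y': "y' \<in> vclosure T k Y b M"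
  shows "b y y' \<le> b y' y"
proof -
  have sq: "(SUP n. T (u n) (u n)) = k" using sq_sup u by blast
  have sq2: "(SUP n. T (T (u n) (u n)) (T (u n) (u n))) = k"
    by (rule sq_sup[OF sq]) (metis mono2 u(3))
  have ex: "w \<in> vclosure T k Y b M \<Longrightarrow> \<exists>z\<in>M. u n \<le> T (b w z) (b z w)" for n w
    using wb[of "u n" _ M] u unfolding vclosure_def by blast
  have yY: "y \<in> Y" "y' \<in> Y" using y y' unfolding vclosure_def by auto
  have tr: "\<And>p q r. p \<in> Y \<Longrightarrow> q \<in> Y \<Longrightarrow> r \<in> Y \<Longrightarrow> T (b p q) (b q r) \<le> b p r"
    using Y(1) unfolding vcat_def by blast
  show ?thesis
  proof (rule absorb[OF sq2])
    fix n
    obtain z where z: "z \<in> M" "u n \<le> T (b y z) (b z y)" using ex[OF y] by blast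
    obtain z' where z': "z' \<in> M" "u n \<le> T (b y' z') (b z' y')" using ex[OF y'] by blast
    have zY: "z \<in> Y" "z' \<in> Y" using z z' Y(2) by auto
    define p where "p = b y' z'"
    define q where "q = b z y"
    define c where "c = b y y'"
    have up: "u n \<le> p" using z' le_left order_trans p_def by blast
    have uq: "u n \<le> q" using z le_right order_trans q_def by blast
    have "T (T (T (u n) (u n)) (T (u n) (u n))) c \<le> T (T (T q p) (T q p)) c"
      by (intro mono2 up uq order_refl)
    also have "\<dots> = T p (T (T q (T c p)) q)" by (simp add: ac)
    also have "\<dots> \<le> T p (T (T q (b y z')) q)"
      unfolding c_def p_def by (intro monor mono2 order_refl tr yY zY)
    also have "\<dots> \<le> T p (T (b z z') q)"
      unfolding q_def by (intro monor mono2 order_refl tr yY zY)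
    also have "\<dots> = T p (T (b z' z) q)" using Y(3) z z' unfolding vsymmetric_def by simp
    also have "\<dots> \<le> T p (b z' y)"
      unfolding q_def by (intro monor mono2 order_refl tr yY zY)
    also have "\<dots> \<le> b y' y"
      unfolding p_def by (intro tr yY zY)
    finally show "T (T (T (u n) (u n)) (T (u n) (u n))) (b y y') \<le> b y' y"
      unfolding c_def .
  qed
qed

lemma struct_eq:
  assumes "left_module T X a \<phi>" "right_module T X a \<psi>" "right_module T X a \<psi>'"
      "module_adjoint T k X a \<phi> \<psi>"
  shows "cauchy_struct T X \<psi> \<psi>' = (SUP y\<in>X. T (\<phi> y) (\<psi>' y))"
proof (rule antisym)
  let ?t = "cauchy_struct T X \<psi> \<psi>'"
  have "?t = T ?t k" using unitr by simp
  also have "\<dots> \<le> T ?t (SUP y\<in>X. T (\<phi> y) (\<psi> y))"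
    using assms(4) unfolding module_adjoint_def by (intro monor) auto
  also have "\<dots> = (SUP y\<in>X. T ?t (T (\<phi> y) (\<psi> y)))" unfolding distr by (simp add: image_image)
  also have "\<dots> \<le> (SUP y\<in>X. T (\<phi> y) (\<psi>' y))"
  proof (intro SUP_subset_mono order_refl)
    fix y assume y: "y \<in> X"
    have "T ?t (T (\<phi> y) (\<psi> y)) = T (\<phi> y) (T (\<psi> y) ?t)" by (simp add: ac)
    also have "\<dots> \<le> T (\<phi> y) (T (\<psi> y) (qhom T (\<psi> y) (\<psi>' y)))"
      unfolding cauchy_struct_def using y by (intro monor INF_lower)
    also have "\<dots> \<le> T (\<phi> y) (\<psi>' y)" by (intro monor hom_elim)
    finally show "T ?t (T (\<phi> y) (\<psi> y)) \<le> T (\<phi> y) (\<psi>' y)" .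
  qed
  finally show "?t \<le> (SUP y\<in>X. T (\<phi> y) (\<psi>' y))" .
next
  show "(SUP y\<in>X. T (\<phi> y) (\<psi>' y)) \<le> cauchy_struct T X \<psi> \<psi>'"
    unfolding cauchy_struct_def
  proof (intro SUP_least INF_greatest hom_intro)
    fix x y assume x: "x \<in> X" and y: "y \<in> X"
    have "T (\<psi> x) (T (\<phi> y) (\<psi>' y)) = T (T (\<psi> x) (\<phi> y)) (\<psi>' y)" by (simp add: ac)
    also have "\<dots> \<le> T (a x y) (\<psi>' y)"
      using assms(4) x y unfolding module_adjoint_def by (intro mono2) auto
    also have "\<dots> \<le> \<psi>' x" using assms(3) x y unfolding right_module_def by auto
    finally show "T (\<psi> x) (T (\<phi> y) (\<psi>' y)) \<le> \<psi>' x" .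
  qed
qed

end

theorem corollary3p20:
  fixes tensor :: "'v::complete_lattice \<Rightarrow> 'v \<Rightarrow> 'v" and k :: 'v
  assumes "quantale tensor k"
    and "k = top"
    and "\<exists>u :: nat \<Rightarrow> 'v. (SUP n. u n) = k \<and> (\<forall>n. way_below (u n) k) \<and> (\<forall>n. u n \<le> u (Suc n))"
  shows "(\<forall>(X :: 'a set) a \<phi> \<psi>. vcat tensor k X a \<and> vsymmetric X a \<and>
            left_module tensor X a \<phi> \<and> right_module tensor X a \<psi> \<and>
            module_adjoint tensor k X a \<phi> \<psi> \<longrightarrow> (\<forall>x\<in>X. \<phi> x = \<psi> x))
      \<and> (\<forall>(Y :: 'b set) b M. vcat tensor k Y b \<and> M \<subseteq> Y \<and> vsymmetric M b \<longrightarrow>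
            vsymmetric (vclosure tensor k Y b M) b)
      \<and> (\<forall>(X :: 'a set) a. vcat tensor k X a \<and> vsymmetric X a \<longrightarrow>
            vsymmetric (cauchy tensor k X a) (cauchy_struct tensor X))"
proof -
  interpret iq tensor k using assms(1,2) by unfold_locales
  obtain u :: "nat \<Rightarrow> 'v" where u: "(SUP n. u n) = k" "\<forall>n. way_below (u n) k" "\<forall>n. u n \<le> u (Suc n)"
    using assms(3) by blast
  have P1: "\<forall>(X :: 'a set) a \<phi> \<psi>. vcat tensor k X a \<and> vsymmetric X a \<and>
            left_module tensor X a \<phi> \<and> right_module tensor X a \<psi> \<and>
            module_adjoint tensor k X a \<phi> \<psi> \<longrightarrow> (\<forall>x\<in>X. \<phi> x = \<psi> x)"
  proof (intro allI impI ballI)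
    fix X :: "'a set" and a \<phi> \<psi> x
    assume h: "vcat tensor k X a \<and> vsymmetric X a \<and>
            left_module tensor X a \<phi> \<and> right_module tensor X a \<psi> \<and>
            module_adjoint tensor k X a \<phi> \<psi>" and x: "x \<in> X"
    have "\<psi> x \<le> \<phi> x \<and> \<phi> x \<le> \<psi> x"
      using h by (intro part1_dir[OF u, of X a \<phi> \<psi> x, OF _ _ _ _ x]) simp_all
    then show "\<phi> x = \<psi> x" by (rule conjE) (rule order_antisym)
  qed
  have P2: "\<forall>(Y :: 'b set) b M. vcat tensor k Y b \<and> M \<subseteq> Y \<and> vsymmetric M b \<longrightarrow>
            vsymmetric (vclosure tensor k Y b M) b"
  proof (intro allI impI)
    fix Y :: "'b set" and b M
    assume h: "vcat tensor k Y b \<and> M \<subseteq> Y \<and> vsymmetric M b"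
    show "vsymmetric (vclosure tensor k Y b M) b"
      unfolding vsymmetric_def
    proof (intro ballI)
      fix y y' assume y: "y \<in> vclosure tensor k Y b M" and y': "y' \<in> vclosure tensor k Y b M"
      have 1: "b y y' \<le> b y' y" using h by (intro part2_dir[OF u _ _ _ y y']) simp_all
      have 2: "b y' y \<le> b y y'" using h by (intro part2_dir[OF u _ _ _ y' y]) simp_all
      show "b y y' = b y' y" using 1 2 by (rule order_antisym)
    qed
  qed
  have P3: "vsymmetric (cauchy tensor k X a) (cauchy_struct tensor X)"
    if X: "vcat tensor k X a" "vsymmetric X a" for X :: "'a set" and a
    unfolding vsymmetric_def
  proof (intro ballI)
    fix \<psi> \<psi>' assume p: "\<psi> \<in> cauchy tensor k X a" and p': "\<psi>' \<in> cauchy tensor k X a"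
    obtain \<phi> where f: "right_module tensor X a \<psi>" "left_module tensor X a \<phi>"
      "module_adjoint tensor k X a \<phi> \<psi>" using p unfolding cauchy_def by blast
    obtain \<phi>' where f': "right_module tensor X a \<psi>'" "left_module tensor X a \<phi>'"
      "module_adjoint tensor k X a \<phi>' \<psi>'" using p' unfolding cauchy_def by blast
    have e: "\<forall>x\<in>X. \<phi> x = \<psi> x" using P1 X f by blast
    have e': "\<forall>x\<in>X. \<phi>' x = \<psi>' x" using P1 X f' by blast
    have "cauchy_struct tensor X \<psi> \<psi>' = (SUP y\<in>X. tensor (\<psi> y) (\<psi>' y))"
      using struct_eq[OF f(2) f(1) f'(1) f(3)] e by (auto intro: SUP_cong)
    also have "\<dots> = (SUP y\<in>X. tensor (\<psi>' y) (\<psi> y))" by (simp add: commute)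
    also have "\<dots> = cauchy_struct tensor X \<psi>' \<psi>"
      using struct_eq[OF f'(2) f'(1) f(1) f'(3)] e' by (auto intro: SUP_cong)
    finally show "cauchy_struct tensor X \<psi> \<psi>' = cauchy_struct tensor X \<psi>' \<psi>" .
  qed
  show ?thesis
  proof (intro conjI P1 P2 allI impI)
    fix X :: "'a set" and a
    assume "vcat tensor k X a \<and> vsymmetric X a"
    then show "vsymmetric (cauchy tensor k X a) (cauchy_struct tensor X)"
      by (intro P3) simp_all
  qed
qed

end
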